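(* Let $\mathbb{X}=\ell_p^2$ (the real space $\mathbb{R}^2$ with the $p$-norm), where $p\in\mathbb{N}$ and $p>2$. Let $T\in\mathbb{L}(\mathbb{X},\mathbb{X})$ be an isometry. Then there exists $\epsilon_0>0$ such that for every $0<\epsilon<\epsilon_0$, $T$ is the only uniform $\epsilon$-BPB approximation of $T$.
   Context: $S_{\mathbb{X}}$ is the unit sphere. For $T\in\mathbb{L}(\mathbb{X},\mathbb{X})$ with $\|T\|=1$ and fixed $\epsilon>0$, an operator $A\in\mathbb{L}(\mathbb{X},\mathbb{X})$ with $\|A\|=1$ is a uniform $\epsilon$-BPB approximation of $T$ if there exists $\delta(\epsilon)>0$ such that whenever $x_0\in S_{\mathbb{X}}$ satisfies $\|Tx_0\|>1-\delta(\epsilon)$, there exists $u_0\in S_{\mathbb{X}}$ with $\|Au_0\|=1$, $\|u_0-x_0\|<\epsilon$ and $\|A-T\|<\epsilon$. *)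

theory Defs
  imports "HOL-Analysis.Analysis"
begin

definition pnorm :: "nat \<Rightarrow> real \<times> real \<Rightarrow> real" where
  "pnorm p v = (\<bar>fst v\<bar> ^ p + \<bar>snd v\<bar> ^ p) powr (1 / real p)"

definition psphere :: "nat \<Rightarrow> (real \<times> real) set" where
  "psphere p = {x. pnorm p x = 1}"

definition popnorm :: "nat \<Rightarrow> (real \<times> real \<Rightarrow> real \<times> real) \<Rightarrow> real" where
  "popnorm p A = (SUP x\<in>psphere p. pnorm p (A x))"

definition p_isometry :: "nat \<Rightarrow> (real \<times> real \<Rightarrow> real \<times> real) \<Rightarrow> bool" where
  "p_isometry p T \<longleftrightarrow> linear T \<and> (\<forall>x. pnorm p (T x) = pnorm p x)"

text \<open>A is a uniform eps-BPB approximation of T (T assumed of norm one).\<close>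
definition uniform_BPB_approx ::
  "nat \<Rightarrow> real \<Rightarrow> (real \<times> real \<Rightarrow> real \<times> real) \<Rightarrow> (real \<times> real \<Rightarrow> real \<times> real) \<Rightarrow> bool" where
  "uniform_BPB_approx p \<epsilon> T A \<longleftrightarrow>
     linear A \<and> popnorm p A = 1 \<and>
     (\<exists>\<delta>>0. \<forall>x0\<in>psphere p. pnorm p (T x0) > 1 - \<delta> \<longrightarrow>
        (\<exists>u0\<in>psphere p. pnorm p (A u0) = 1 \<and> pnorm p (u0 - x0) < \<epsilon>
                          \<and> popnorm p (\<lambda>x. A x - T x) < \<epsilon>))"

end

theory Submission
  imports Defs "HOL-Computational_Algebra.Polynomial"
begin


lemma pow_powr_inv:
  fixes x :: real
  assumes "x \<ge> 0" "p > 0"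
  shows "(x ^ p) powr (1 / real p) = x"
proof (cases "x = 0")
  case True then show ?thesis using assms by simp
next
  case False
  then have "x > 0" using assms by simp
  then have "x ^ p = x powr real p" by (simp add: powr_realpow)
  then show ?thesis using assms \<open>x > 0\<close> by (simp add: powr_powr)
qed

lemma pnorm_eq1:
  assumes "p > 0"
  shows "pnorm p v = 1 \<longleftrightarrow> \<bar>fst v\<bar> ^ p + \<bar>snd v\<bar> ^ p = 1"
proof -
  define S where "S = \<bar>fst v\<bar> ^ p + \<bar>snd v\<bar> ^ p"
  have S0: "S \<ge> 0" unfolding S_def by simp
  have "S powr (1 / real p) = 1 \<longleftrightarrow> S = 1"
  proof
    assume h: "S powr (1 / real p) = 1"
    then have "S \<noteq> 0" by auto
    then have "S = (S powr (1 / real p)) powr real p" using S0 assms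
      by (simp add: powr_powr)
    then show "S = 1" using h by simp
  qed simp
  then show ?thesis unfolding pnorm_def S_def by simp
qed

lemma coord_le_pnorm:
  assumes "p > 0"
  shows "\<bar>fst v\<bar> \<le> pnorm p v" "\<bar>snd v\<bar> \<le> pnorm p v"
proof -
  have a: "\<bar>x\<bar> = (\<bar>x\<bar> ^ p) powr (1 / real p)" for x :: real
    using assms by (simp add: pow_powr_inv)
  show "\<bar>fst v\<bar> \<le> pnorm p v" unfolding pnorm_def
    by (subst a) (intro powr_mono2, auto)
  show "\<bar>snd v\<bar> \<le> pnorm p v" unfolding pnorm_def
    by (subst a) (intro powr_mono2, auto)
qed

lemma pnorm_le_l1:
  assumes "p > 0"
  shows "pnorm p v \<le> \<bar>fst v\<bar> + \<bar>snd v\<bar>"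
proof -
  have a: "\<bar>fst v\<bar> ^ p + \<bar>snd v\<bar> ^ p \<le> (\<bar>fst v\<bar> + \<bar>snd v\<bar>) ^ p"
    using assms
  proof -
    have "\<bar>fst v\<bar> ^ p + \<bar>snd v\<bar> ^ p \<le> \<bar>fst v\<bar> * (\<bar>fst v\<bar> + \<bar>snd v\<bar>) ^ (p - 1) + \<bar>snd v\<bar> * (\<bar>fst v\<bar> + \<bar>snd v\<bar>) ^ (p - 1)"
    proof -
      have "\<bar>fst v\<bar> ^ p = \<bar>fst v\<bar> * \<bar>fst v\<bar> ^ (p-1)" using assms by (metis Suc_diff_1 power_Suc)
      also have "\<dots> \<le> \<bar>fst v\<bar> * (\<bar>fst v\<bar> + \<bar>snd v\<bar>) ^ (p - 1)" by (intro mult_left_mono power_mono) auto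
      finally have 1: "\<bar>fst v\<bar> ^ p \<le> \<bar>fst v\<bar> * (\<bar>fst v\<bar> + \<bar>snd v\<bar>) ^ (p - 1)" .
      have "\<bar>snd v\<bar> ^ p = \<bar>snd v\<bar> * \<bar>snd v\<bar> ^ (p-1)" using assms by (metis Suc_diff_1 power_Suc)
      also have "\<dots> \<le> \<bar>snd v\<bar> * (\<bar>fst v\<bar> + \<bar>snd v\<bar>) ^ (p - 1)" by (intro mult_left_mono power_mono) auto
      finally show ?thesis using 1 by linarith
    qed
    also have "\<dots> = (\<bar>fst v\<bar> + \<bar>snd v\<bar>) ^ p" using assms
      by (metis Suc_diff_1 distrib_right power_Suc)
    finally show ?thesis .
  qed
  have "pnorm p v \<le> ((\<bar>fst v\<bar> + \<bar>snd v\<bar>) ^ p) powr (1 / real p)"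
    unfolding pnorm_def by (intro powr_mono2 a) auto
  also have "\<dots> = \<bar>fst v\<bar> + \<bar>snd v\<bar>" using assms by (simp add: pow_powr_inv)
  finally show ?thesis .
qed



lemma linear_coords:
  fixes B :: "real \<times> real \<Rightarrow> real \<times> real"
  assumes "linear B"
  shows "B x = (fst (B (1,0)) * fst x + fst (B (0,1)) * snd x,
                snd (B (1,0)) * fst x + snd (B (0,1)) * snd x)"
proof -
  interpret L: linear B by (rule assms)
  have "x = fst x *\<^sub>R (1,0) + snd x *\<^sub>R (0,1)" by (cases x) simp
  then have "B x = B (fst x *\<^sub>R (1,0) + snd x *\<^sub>R (0,1))" by simp
  also have "\<dots> = fst x *\<^sub>R B (1,0) + snd x *\<^sub>R B (0,1)"
    by (simp only: L.add L.scale)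
  finally show ?thesis by (simp add: prod_eq_iff mult.commute)
qed
lemma psphere_coord: assumes "p > 0" "x \<in> psphere p"
  shows "\<bar>fst x\<bar> \<le> 1" "\<bar>snd x\<bar> \<le> 1"
  using coord_le_pnorm[OF assms(1), of x] assms(2) unfolding psphere_def by auto

lemma bdd_lin:
  fixes L :: "real \<times> real \<Rightarrow> real \<times> real"
  assumes "linear L" "p > 0"
  shows "bdd_above ((\<lambda>x. pnorm p (L x)) ` psphere p)"
proof -
  define C where "C = \<bar>fst (L (1,0))\<bar> + \<bar>fst (L (0,1))\<bar> + \<bar>snd (L (1,0))\<bar> + \<bar>snd (L (0,1))\<bar>"
  have "pnorm p (L x) \<le> C" if "x \<in> psphere p" for x
  proof -
    have h: "\<bar>fst x\<bar> \<le> 1" "\<bar>snd x\<bar> \<le> 1" using psphere_coord[OF assms(2) that] by auto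
    have "\<bar>a * y\<bar> \<le> \<bar>a\<bar>" if "\<bar>y\<bar> \<le> 1" for a y :: real
      using that by (simp add: abs_mult mult_left_le)
    note m = this[OF h(1)] this[OF h(2)]
    have e1: "fst (L x) = fst (L (1,0)) * fst x + fst (L (0,1)) * snd x"
      using linear_coords[OF assms(1), of x] by simp
    have e2: "snd (L x) = snd (L (1,0)) * fst x + snd (L (0,1)) * snd x"
      using linear_coords[OF assms(1), of x] by simp
    have f1: "\<bar>fst (L x)\<bar> \<le> \<bar>fst (L (1,0))\<bar> + \<bar>fst (L (0,1))\<bar>"
      unfolding e1 using abs_triangle_ineq m[of "fst (L (1,0))"] m[of "fst (L (0,1))"]
      by (smt (verit))
    have f2: "\<bar>snd (L x)\<bar> \<le> \<bar>snd (L (1,0))\<bar> + \<bar>snd (L (0,1))\<bar>"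
      unfolding e2 using abs_triangle_ineq m[of "snd (L (1,0))"] m[of "snd (L (0,1))"]
      by (smt (verit))
    have "pnorm p (L x) \<le> \<bar>fst (L x)\<bar> + \<bar>snd (L x)\<bar>" by (rule pnorm_le_l1[OF assms(2)])
    also have "\<dots> \<le> C" unfolding C_def using f1 f2 by linarith
    finally show ?thesis .
  qed
  then show ?thesis by (intro bdd_aboveI2) blast
qed

lemma popnorm_upper:
  assumes "linear L" "p > 0" "x \<in> psphere p"
  shows "pnorm p (L x) \<le> popnorm p L"
  unfolding popnorm_def by (rule cSUP_upper[OF assms(3) bdd_lin[OF assms(1,2)]])

lemma roots_identity:
  fixes a b c d :: real
  assumes "finite S" "card S > p"
    and "\<forall>s\<in>S. (a * s + b) ^ p + (c * s + d) ^ p = s ^ p + 1"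
  shows "(a * s + b) ^ p + (c * s + d) ^ p = s ^ p + 1"
proof -
  define Q where "Q = [:b, a:] ^ p + [:d, c:] ^ p - [:0, 1:] ^ p - 1"
  have ev: "poly Q x = (a * x + b) ^ p + (c * x + d) ^ p - (x ^ p + 1)" for x
    unfolding Q_def by (simp add: algebra_simps)
  have "Q = 0"
  proof (rule ccontr)
    assume "Q \<noteq> 0"
    have dg: "degree Q \<le> p"
    proof -
      have dl: "degree ([:y, x:] ^ p) \<le> p" for x y :: real
      proof -
        have e: "degree [:y, x:] \<le> 1" by (cases "x = 0") auto
        have "degree ([:y, x:] ^ p) \<le> degree [:y, x:] * p" by (rule degree_power_le)
        also have "\<dots> \<le> 1 * p" by (rule mult_le_mono1[OF e])
        finally show ?thesis by simp
      qed
      note d1 = dl[of b a] and d2 = dl[of d c]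
      have d3: "degree ([:0, 1:] ^ p :: real poly) \<le> p" using degree_power_le[of "[:0,1:] :: real poly" p]
        by simp
      show ?thesis unfolding Q_def
        by (intro degree_diff_le degree_add_le d1 d2 d3) simp
    qed
    have "S \<subseteq> {x. poly Q x = 0}" using assms(3) ev by auto
    then have "card S \<le> card {x. poly Q x = 0}"
      by (intro card_mono poly_roots_finite \<open>Q \<noteq> 0\<close>)
    also have "\<dots> \<le> degree Q" by (rule card_poly_roots_bound[OF \<open>Q \<noteq> 0\<close>])
    finally show False using dg assms(2) by linarith
  qed
  then have "poly Q s = 0" by simp
  then show ?thesis using ev[of s] by simp
qed

lemma deriv_identity:
  fixes a b c d :: real
  assumes "p \<ge> 2" "\<And>s. (a * s + b) ^ p + (c * s + d) ^ p = s ^ p + 1"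
  shows "a * b ^ (p - 1) + c * d ^ (p - 1) = 0" "b ^ p + d ^ p = 1"
proof -
  show "b ^ p + d ^ p = 1" using assms(2)[of 0] using assms(1) by simp
  have f: "(\<lambda>s. (a * s + b) ^ p + (c * s + d) ^ p) = (\<lambda>s. s ^ p + 1)"
    using assms(2) by auto
  have D1: "((\<lambda>s. (a * s + b) ^ p + (c * s + d) ^ p) has_real_derivative
      (real p * (a * 0 + b) ^ (p - 1) * a + real p * (c * 0 + d) ^ (p - 1) * c)) (at 0)"
    by (auto intro!: derivative_eq_intros)
  have D2: "((\<lambda>s. s ^ p + 1) has_real_derivative (real p * 0 ^ (p - 1) * 1 + 0)) (at (0::real))"
    by (auto intro!: derivative_eq_intros)
  have "real p * (a * 0 + b) ^ (p - 1) * a + real p * (c * 0 + d) ^ (p - 1) * c = real p * 0 ^ (p - 1) * 1 + 0"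
    using DERIV_unique[OF D1[unfolded f] D2] .
  then have "real p * (a * b ^ (p - 1) + c * d ^ (p - 1)) = 0" using assms(1)
    by (simp add: algebra_simps)
  then show "a * b ^ (p - 1) + c * d ^ (p - 1) = 0" using assms(1) by simp
qed



lemma alg_key:
  fixes a c d e :: real
  assumes q: "q \<ge> 1" and a: "a > 0" and e: "e > 0" and ce: "\<bar>c\<bar> < e"
    and E1: "a * c ^ (q + 1) + d * e ^ (q + 1) = 0"
    and E2: "c * a ^ (q + 1) + e * d ^ (q + 1) = 0"
  shows "c = 0 \<and> d = 0"
proof -
  define X where "X = \<bar>c\<bar>"
  define Y where "Y = \<bar>d\<bar>"
  have X0: "X \<ge> 0" and Y0: "Y \<ge> 0" unfolding X_def Y_def by auto
  have A1: "a * X ^ (q + 1) = e ^ (q + 1) * Y"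
  proof -
    have "\<bar>a * c ^ (q + 1)\<bar> = \<bar>d * e ^ (q + 1)\<bar>" using E1 by (simp add: eq_neg_iff_add_eq_0[symmetric])
    then show ?thesis using a e unfolding X_def Y_def by (simp add: abs_mult power_abs mult.commute)
  qed
  have A2: "a ^ (q + 1) * X = e * Y ^ (q + 1)"
  proof -
    have "\<bar>c * a ^ (q + 1)\<bar> = \<bar>e * d ^ (q + 1)\<bar>" using E2 by (simp add: eq_neg_iff_add_eq_0[symmetric])
    then show ?thesis using a e unfolding X_def Y_def by (simp add: abs_mult power_abs mult.commute)
  qed
  have "(a * X) ^ (q + 2) = (a * X ^ (q + 1)) * (a ^ (q + 1) * X)"
    by (simp add: power_mult_distrib algebra_simps power_Suc)
  also have "\<dots> = (e ^ (q + 1) * Y) * (e * Y ^ (q + 1))" using A1 A2 by simp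
  also have "\<dots> = (e * Y) ^ (q + 2)"
    by (simp add: power_mult_distrib algebra_simps power_Suc)
  finally have "(a * X) ^ (q + 2) = (e * Y) ^ (q + 2)" .
  then have AY: "a * X = e * Y"
    using a e X0 Y0 by (metis mult_nonneg_nonneg less_imp_le power_eq_imp_eq_base zero_less_Suc add_2_eq_Suc')
  have "X = 0"
  proof (rule ccontr)
    assume X: "X \<noteq> 0"
    have "a * X ^ (q + 1) * e = e ^ (q + 1) * (e * Y)" using A1 by (simp add: algebra_simps)
    also have "\<dots> = e ^ (q + 1) * (a * X)" using AY by simp
    finally have "(a * X * e) * X ^ q = (a * X * e) * e ^ q"
      by (simp add: algebra_simps power_Suc)
    then have "X ^ q = e ^ q" using a e X by simp
    then have "X = e" using q X0 e by (metis less_imp_le not_one_le_zero power_eq_imp_eq_base neq0_conv)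
    then show False using ce unfolding X_def by simp
  qed
  then have "c = 0" unfolding X_def by simp
  then show ?thesis using E1 e q by simp
qed



lemma ratio_inj:
  fixes u1 u2 v1 v2 :: real
  assumes "p > 0" "u1 > 0" "u2 > 0" "v1 > 0" "v2 > 0"
    and "u1 ^ p + u2 ^ p = v1 ^ p + v2 ^ p" and "u1 / u2 = v1 / v2"
  shows "u1 = v1"
proof -
  have gen: "False" if "x1 < y1" "x1 > 0" "x2 > 0" "y1 > 0" "y2 > 0"
      "x1 ^ p + x2 ^ p = y1 ^ p + y2 ^ p" "x1 / x2 = y1 / y2" for x1 x2 y1 y2 :: real
  proof -
    have "x1 * y2 = y1 * x2" using that by (simp add: field_simps)
    then have "x2 < y2" using that
      by (metis mult_less_cancel_right_pos mult.commute linorder_neqE_linordered_idom mult_strict_mono less_irrefl order_less_imp_le mult_left_mono not_le)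
    have "x1 ^ p < y1 ^ p" using that assms by (intro power_strict_mono) auto
    moreover have "x2 ^ p < y2 ^ p" using \<open>x2 < y2\<close> that assms by (intro power_strict_mono) auto
    ultimately show False using that by linarith
  qed
  show ?thesis
  proof (rule ccontr)
    assume "u1 \<noteq> v1"
    then consider "u1 < v1" | "v1 < u1" by linarith
    then show False
    proof cases
      case 1 then show ?thesis using gen[of u1 v1 u2 v2] assms by auto
    next
      case 2 then show ?thesis using gen[of v1 u1 v2 u2] assms by auto
    qed
  qed
qed

lemma pnorm_zero_iff: assumes "p > 0" shows "pnorm p v = 0 \<longleftrightarrow> v = 0"
proof
  assume "pnorm p v = 0"
  then have "\<bar>fst v\<bar> \<le> 0" "\<bar>snd v\<bar> \<le> 0" using coord_le_pnorm[OF assms, of v] by auto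
  then show "v = 0" by (simp add: prod_eq_iff)
next
  assume "v = 0" then show "pnorm p v = 0" using assms unfolding pnorm_def by simp
qed

lemma e1_sphere: "p > 0 \<Longrightarrow> (1, 0) \<in> psphere p"
  unfolding psphere_def by (simp add: pnorm_eq1)
lemma e2_sphere: "p > 0 \<Longrightarrow> (0, 1) \<in> psphere p"
  unfolding psphere_def by (simp add: pnorm_eq1)



lemma core:
  fixes B :: "real \<times> real \<Rightarrow> real \<times> real" and p :: nat and \<epsilon> :: real
  assumes p3: "p \<ge> 3" and lin: "linear B" and ep: "\<epsilon> > 0" and ep0: "\<epsilon> < 1 / (8 * (real p + 1))"
    and hBI: "\<forall>x\<in>psphere p. pnorm p (B x - x) < \<epsilon>"
    and hd: "\<forall>x0\<in>psphere p. \<exists>u\<in>psphere p. pnorm p (B u) = 1 \<and> pnorm p (u - x0) < \<epsilon>"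
  shows "B x = x"
proof -
  have p0: "p > 0" using p3 by simp
  have eps_small: "\<epsilon> < 1/32"
  proof -
    have "8 * (real p + 1) \<ge> 32" using p3 by simp
    then have "1 / (8 * (real p + 1)) \<le> 1/32" by (simp add: field_simps)
    then show ?thesis using ep0 by linarith
  qed
  define b11 where "b11 = fst (B (1,0))"
  define b21 where "b21 = snd (B (1,0))"
  define b12 where "b12 = fst (B (0,1))"
  define b22 where "b22 = snd (B (0,1))"
  have Bc: "B y = (b11 * fst y + b12 * snd y, b21 * fst y + b22 * snd y)" for y
    unfolding b11_def b12_def b21_def b22_def by (rule linear_coords[OF lin])
  have cb: "\<bar>fst (B y) - fst y\<bar> < \<epsilon>" "\<bar>snd (B y) - snd y\<bar> < \<epsilon>" if "y \<in> psphere p" for y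
    using coord_le_pnorm[OF p0, of "B y - y"] hBI that by auto
  have b11: "\<bar>b11 - 1\<bar> < \<epsilon>" and b21: "\<bar>b21\<bar> < \<epsilon>"
    using cb[OF e1_sphere[OF p0]] unfolding b11_def b21_def by auto
  have b12: "\<bar>b12\<bar> < \<epsilon>" and b22: "\<bar>b22 - 1\<bar> < \<epsilon>"
    using cb[OF e2_sphere[OF p0]] unfolding b12_def b22_def by auto
  define h :: real where "h = 1 / (4 * (real p + 1))"
  have h2: "2 * \<epsilon> < h" using ep0 unfolding h_def by (simp add: field_simps)
  have hpos: "h > 0" unfolding h_def by simp
  define a where "a k = 1/4 + real k * h" for k :: nat
  have a_lo: "a k \<ge> 1/4" for k unfolding a_def using hpos by simp
  have a_hi: "a k \<le> 1/2" if "k \<le> p" for k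
  proof -
    have "real k * h \<le> real p * h" using that hpos by (simp add: mult_right_mono)
    also have "\<dots> \<le> 1/4" unfolding h_def by (simp add: field_simps)
    finally show ?thesis unfolding a_def by simp
  qed
  define x0 where "x0 k = (a k, (1 - a k ^ p) powr (1 / real p))" for k
  have apow: "a k ^ p \<le> 1/2" if "k \<le> p" for k
  proof -
    have "a k ^ p \<le> a k ^ 1" using a_lo[of k] a_hi[OF that] p0
      by (intro power_decreasing) auto
    then show ?thesis using a_hi[OF that] by simp
  qed
  have x0s: "x0 k \<in> psphere p" "snd (x0 k) \<ge> 1/2" if "k \<le> p" for k
  proof -
    define w where "w = (1 - a k ^ p) powr (1 / real p)"
    have w1: "1 - a k ^ p \<ge> 1/2" using apow[OF that] by simp
    have wp: "w ^ p = 1 - a k ^ p"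
    proof -
      have "w ^ p = w powr real p" using w1 unfolding w_def by (simp add: powr_realpow)
      also have "\<dots> = 1 - a k ^ p" using w1 p0 unfolding w_def by (simp add: powr_powr)
      finally show ?thesis .
    qed
    have w0: "w \<ge> 0" unfolding w_def by simp
    have "\<bar>fst (x0 k)\<bar> ^ p + \<bar>snd (x0 k)\<bar> ^ p = 1"
      unfolding x0_def using a_lo[of k] w0 wp by (simp add: w_def[symmetric])
    then show "x0 k \<in> psphere p" unfolding psphere_def using pnorm_eq1[OF p0] by simp
    have "w \<le> 1"
    proof (rule ccontr)
      assume "\<not> w \<le> 1"
      then have "1 < w ^ p" using p0 by (simp add: one_less_power)
      moreover have "a k ^ p \<ge> 0" using a_lo[of k] by simp
      ultimately show False using wp by linarith
    qed
    then have "w ^ p \<le> w ^ 1" using w0 p0 by (intro power_decreasing) auto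
    then show "snd (x0 k) \<ge> 1/2" using wp w1 unfolding x0_def w_def[symmetric] by simp
  qed
  have "\<forall>k\<in>{..p}. \<exists>u. u \<in> psphere p \<and> pnorm p (B u) = 1 \<and> pnorm p (u - x0 k) < \<epsilon>"
    using hd x0s(1) by fastforce
  then obtain U where U: "\<And>k. k \<in> {..p} \<Longrightarrow> U k \<in> psphere p \<and> pnorm p (B (U k)) = 1 \<and> pnorm p (U k - x0 k) < \<epsilon>"
    by metis
  define u1 where "u1 k = fst (U k)" for k
  define u2 where "u2 k = snd (U k)" for k
  have props: "u1 k > 0" "u2 k > 0" "b11 * u1 k + b12 * u2 k > 0" "b21 * u1 k + b22 * u2 k > 0"
     "\<bar>u1 k - a k\<bar> < \<epsilon>"
     "u1 k ^ p + u2 k ^ p = 1"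
     "(b11 * u1 k + b12 * u2 k) ^ p + (b21 * u1 k + b22 * u2 k) ^ p = 1"
    if "k \<le> p" for k
  proof -
    have Uk: "U k \<in> psphere p" "pnorm p (B (U k)) = 1" "pnorm p (U k - x0 k) < \<epsilon>" using U that by auto
    have c1: "\<bar>u1 k - a k\<bar> < \<epsilon>" "\<bar>u2 k - snd (x0 k)\<bar> < \<epsilon>"
      using coord_le_pnorm[OF p0, of "U k - x0 k"] Uk(3) unfolding u1_def u2_def x0_def by auto
    show "\<bar>u1 k - a k\<bar> < \<epsilon>" by (rule c1(1))
    show g1: "u1 k > 0" using c1 a_lo[of k] eps_small by linarith
    show g2: "u2 k > 0" using c1 x0s(2)[OF that] eps_small by linarith
    have cb1: "\<bar>fst (B (U k)) - u1 k\<bar> < \<epsilon>" "\<bar>snd (B (U k)) - u2 k\<bar> < \<epsilon>"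
      using cb[OF Uk(1)] unfolding u1_def u2_def by auto
    have BU: "B (U k) = (b11 * u1 k + b12 * u2 k, b21 * u1 k + b22 * u2 k)"
      unfolding u1_def u2_def by (rule Bc)
    show "b11 * u1 k + b12 * u2 k > 0" using cb1(1) c1 a_lo[of k] eps_small unfolding BU by simp
    show "b21 * u1 k + b22 * u2 k > 0" using cb1(2) c1 x0s(2)[OF that] eps_small unfolding BU by simp
    have "\<bar>u1 k\<bar> ^ p + \<bar>u2 k\<bar> ^ p = 1" using Uk(1) pnorm_eq1[OF p0] unfolding psphere_def u1_def u2_def by simp
    then show "u1 k ^ p + u2 k ^ p = 1" using g1 g2 by simp
    have "\<bar>b11 * u1 k + b12 * u2 k\<bar> ^ p + \<bar>b21 * u1 k + b22 * u2 k\<bar> ^ p = 1"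
      using Uk(2) pnorm_eq1[OF p0] unfolding BU by simp
    then show "(b11 * u1 k + b12 * u2 k) ^ p + (b21 * u1 k + b22 * u2 k) ^ p = 1"
      using cb1 c1 a_lo[of k] x0s(2)[OF that] eps_small unfolding BU by simp
  qed
  have sep: "u1 j \<noteq> u1 k" if "j \<le> p" "k \<le> p" "j \<noteq> k" for j k
  proof -
    have "\<bar>a j - a k\<bar> \<ge> h"
    proof -
      have "\<bar>real j - real k\<bar> \<ge> 1" using that by linarith
      then have "\<bar>real j - real k\<bar> * h \<ge> 1 * h" using hpos by (intro mult_right_mono) auto
      then show ?thesis unfolding a_def using hpos by (simp add: abs_mult left_diff_distrib[symmetric])
    qed
    then show ?thesis using props(5)[OF that(1)] props(5)[OF that(2)] h2 by auto
  qed
  define S1 where "S1 = (\<lambda>k. u1 k / u2 k) ` {..p}"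
  define S2 where "S2 = (\<lambda>k. u2 k / u1 k) ` {..p}"
  have inj1: "inj_on (\<lambda>k. u1 k / u2 k) {..p}"
  proof (rule inj_onI)
    fix j k assume jk: "j \<in> {..p}" "k \<in> {..p}" "u1 j / u2 j = u1 k / u2 k"
    have "u1 j = u1 k"
      using ratio_inj[OF p0 props(1,2)[of j] props(1,2)[of k]] props(6)[of j] props(6)[of k] jk by auto
    then show "j = k" using sep jk by auto
  qed
  have inj2: "inj_on (\<lambda>k. u2 k / u1 k) {..p}"
  proof (rule inj_onI)
    fix j k assume jk: "j \<in> {..p}" "k \<in> {..p}" "u2 j / u1 j = u2 k / u1 k"
    have "u2 j = u2 k"
      using ratio_inj[OF p0 props(2,1)[of j] props(2,1)[of k]] props(6)[of j] props(6)[of k] jk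
      by (auto simp: add.commute)
    then have "u1 j ^ p = u1 k ^ p" using props(6)[of j] props(6)[of k] jk by auto
    then have "u1 j = u1 k" using props(1)[of j] props(1)[of k] jk p0
      by (meson atMost_iff less_imp_le power_eq_imp_eq_base)
    then show "j = k" using sep jk by auto
  qed
  have cS1: "card S1 > p" unfolding S1_def using card_image[OF inj1] by simp
  have cS2: "card S2 > p" unfolding S2_def using card_image[OF inj2] by simp
  have id1: "\<forall>s\<in>S1. (b11 * s + b12) ^ p + (b21 * s + b22) ^ p = s ^ p + 1"
  proof
    fix s assume "s \<in> S1"
    then obtain k where k: "k \<le> p" "s = u1 k / u2 k" unfolding S1_def by auto
    have pos: "u2 k > 0" using props(2)[OF k(1)] .
    have "(b11 * s + b12) ^ p + (b21 * s + b22) ^ p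
        = ((b11 * u1 k + b12 * u2 k) ^ p + (b21 * u1 k + b22 * u2 k) ^ p) / u2 k ^ p"
    proof -
      have e1: "b11 * s + b12 = (b11 * u1 k + b12 * u2 k) / u2 k" using pos unfolding k(2) by (simp add: field_simps)
      have e2: "b21 * s + b22 = (b21 * u1 k + b22 * u2 k) / u2 k" using pos unfolding k(2) by (simp add: field_simps)
      show ?thesis unfolding e1 e2 power_divide by (rule add_divide_distrib[symmetric])
    qed
    also have "\<dots> = (u1 k ^ p + u2 k ^ p) / u2 k ^ p" using props(6,7)[OF k(1)] by simp
    also have "\<dots> = s ^ p + 1" using pos unfolding k(2) power_divide add_divide_distrib by simp
    finally show "(b11 * s + b12) ^ p + (b21 * s + b22) ^ p = s ^ p + 1" .
  qed
  have id2: "\<forall>s\<in>S2. (b12 * s + b11) ^ p + (b22 * s + b21) ^ p = s ^ p + 1"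
  proof
    fix s assume "s \<in> S2"
    then obtain k where k: "k \<le> p" "s = u2 k / u1 k" unfolding S2_def by auto
    have pos: "u1 k > 0" using props(1)[OF k(1)] .
    have "(b12 * s + b11) ^ p + (b22 * s + b21) ^ p
        = ((b11 * u1 k + b12 * u2 k) ^ p + (b21 * u1 k + b22 * u2 k) ^ p) / u1 k ^ p"
    proof -
      have e1: "b12 * s + b11 = (b11 * u1 k + b12 * u2 k) / u1 k" using pos unfolding k(2) by (simp add: field_simps)
      have e2: "b22 * s + b21 = (b21 * u1 k + b22 * u2 k) / u1 k" using pos unfolding k(2) by (simp add: field_simps)
      show ?thesis unfolding e1 e2 power_divide by (rule add_divide_distrib[symmetric])
    qed
    also have "\<dots> = (u1 k ^ p + u2 k ^ p) / u1 k ^ p" using props(6,7)[OF k(1)] by simp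
    also have "\<dots> = s ^ p + 1" using pos unfolding k(2) power_divide add_divide_distrib by simp
    finally show "(b12 * s + b11) ^ p + (b22 * s + b21) ^ p = s ^ p + 1" .
  qed
  have fin1: "finite S1" and fin2: "finite S2" unfolding S1_def S2_def by auto
  have I1: "\<And>s. (b11 * s + b12) ^ p + (b21 * s + b22) ^ p = s ^ p + 1"
    by (rule roots_identity[OF fin1 cS1 id1])
  have I2: "\<And>s. (b12 * s + b11) ^ p + (b22 * s + b21) ^ p = s ^ p + 1"
    by (rule roots_identity[OF fin2 cS2 id2])
  have p2: "p \<ge> 2" using p3 by simp
  note D1 = deriv_identity[OF p2 I1] and D2 = deriv_identity[OF p2 I2]
  have pq: "p - 1 = (p - 2) + 1" using p3 by simp
  have q1: "p - 2 \<ge> 1" using p3 by simp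
  have "b12 = 0 \<and> b21 = 0"
    apply (rule alg_key[OF q1, of b11 b22 b12 b21])
    using b11 b22 b12 eps_small D1(1) D2(1) unfolding pq by auto
  then have z: "b12 = 0" "b21 = 0" by auto
  have "b11 ^ p = 1 ^ p" using D2(2) z p0 by (simp add: zero_power)
  moreover have "b11 \<ge> 0" using b11 eps_small by linarith
  ultimately have o1: "b11 = 1" using p0 power_eq_imp_eq_base[of b11 p 1] by simp
  have "b22 ^ p = 1 ^ p" using D1(2) z p0 by (simp add: zero_power)
  moreover have "b22 \<ge> 0" using b22 eps_small by linarith
  ultimately have o2: "b22 = 1" using p0 power_eq_imp_eq_base[of b22 p 1] by simp
  show "B x = x" using Bc[of x] z o1 o2 by (simp add: prod_eq_iff)
qed



theorem theorem2p9:
  fixes p :: nat and T :: "real \<times> real \<Rightarrow> real \<times> real"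
  assumes "p > 2"
    and "p_isometry p T"
  shows "\<exists>\<epsilon>0>0. \<forall>\<epsilon>. 0 < \<epsilon> \<and> \<epsilon> < \<epsilon>0 \<longrightarrow>
           uniform_BPB_approx p \<epsilon> T T \<and>
           (\<forall>A. uniform_BPB_approx p \<epsilon> T A \<longrightarrow> A = T)"
proof -
  have p3: "p \<ge> 3" and p0: "p > 0" using assms(1) by auto
  have linT: "linear T" and isoT: "\<And>x. pnorm p (T x) = pnorm p x"
    using assms(2) unfolding p_isometry_def by auto
  have injT: "inj T"
  proof (rule injI)
    fix x y assume "T x = T y"
    then have "T (x - y) = 0" using linT by (simp add: linear_diff)
    then have "pnorm p (T (x - y)) = 0" using pnorm_zero_iff[OF p0] by simp
    then have "pnorm p (x - y) = 0" using isoT[of "x - y"] by simp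
    then show "x = y" using pnorm_zero_iff[OF p0] by simp
  qed
  obtain g where linG: "linear g" and gT: "\<And>x. g (T x) = x" and Tg: "\<And>x. T (g x) = x"
    using linear_injective_isomorphism[OF linT injT] by metis
  have isoG: "pnorm p (g y) = pnorm p y" for y using isoT[of "g y"] Tg by simp
  have ne: "psphere p \<noteq> {}" using e1_sphere[OF p0] by auto
  have sph1: "pnorm p x = 1" if "x \<in> psphere p" for x using that unfolding psphere_def by simp
  have pn0: "pnorm p 0 = 0" using pnorm_zero_iff[OF p0] by simp
  define e0 :: real where "e0 = 1 / (8 * (real p + 1))"
  have "e0 > 0" unfolding e0_def by simp
  moreover have "uniform_BPB_approx p \<epsilon> T T \<and> (\<forall>A. uniform_BPB_approx p \<epsilon> T A \<longrightarrow> A = T)"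
    if ep: "0 < \<epsilon>" "\<epsilon> < e0" for \<epsilon>
  proof
    have nT: "popnorm p T = 1"
    proof -
      have "popnorm p T = (SUP x\<in>psphere p. (1::real))" unfolding popnorm_def
        using isoT sph1 by (intro SUP_cong) auto
      also have "\<dots> = 1" using ne by simp
      finally show ?thesis .
    qed
    have n0: "popnorm p (\<lambda>x. T x - T x) = 0"
    proof -
      have "popnorm p (\<lambda>x. T x - T x) = (SUP x\<in>psphere p. (0::real))" unfolding popnorm_def
        using pn0 by simp
      also have "\<dots> = 0" using ne by simp
      finally show ?thesis .
    qed
    show "uniform_BPB_approx p \<epsilon> T T"
      unfolding uniform_BPB_approx_def
    proof (intro conjI linT nT exI[of _ 1] allI ballI impI)
      show "(0::real) < 1" by simp
      fix x0 assume x0: "x0 \<in> psphere p"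
      show "\<exists>u0\<in>psphere p. pnorm p (T u0) = 1 \<and> pnorm p (u0 - x0) < \<epsilon> \<and> popnorm p (\<lambda>x. T x - T x) < \<epsilon>"
        using x0 isoT sph1 pn0 n0 ep by (intro bexI[of _ x0]) auto
    qed
    show "\<forall>A. uniform_BPB_approx p \<epsilon> T A \<longrightarrow> A = T"
    proof (intro allI impI)
      fix A assume "uniform_BPB_approx p \<epsilon> T A"
      then obtain \<delta> where linA: "linear A" and dp: "\<delta> > 0"
        and H: "\<forall>x0\<in>psphere p. pnorm p (T x0) > 1 - \<delta> \<longrightarrow>
        (\<exists>u0\<in>psphere p. pnorm p (A u0) = 1 \<and> pnorm p (u0 - x0) < \<epsilon>
                          \<and> popnorm p (\<lambda>x. A x - T x) < \<epsilon>)"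
        unfolding uniform_BPB_approx_def by blast
      have H': "\<exists>u0\<in>psphere p. pnorm p (A u0) = 1 \<and> pnorm p (u0 - x0) < \<epsilon>
                          \<and> popnorm p (\<lambda>x. A x - T x) < \<epsilon>" if "x0 \<in> psphere p" for x0
        using H that isoT sph1 dp by auto
      have opn: "popnorm p (\<lambda>x. A x - T x) < \<epsilon>" using H'[OF e1_sphere[OF p0]] by auto
      define B where "B = g \<circ> A"
      have linB: "linear B" unfolding B_def using linA linG by (rule linear_compose)
      have linD: "linear (\<lambda>x. A x - T x)" using linA linT by (rule linear_compose_sub)
      have hBI: "\<forall>x\<in>psphere p. pnorm p (B x - x) < \<epsilon>"
      proof
        fix x assume x: "x \<in> psphere p"
        have "B x - x = g (A x - T x)" unfolding B_def using linG gT by (simp add: linear_diff)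
        then have "pnorm p (B x - x) = pnorm p (A x - T x)" using isoG by simp
        also have "\<dots> \<le> popnorm p (\<lambda>x. A x - T x)" by (rule popnorm_upper[OF linD p0 x])
        finally show "pnorm p (B x - x) < \<epsilon>" using opn by linarith
      qed
      have hd: "\<forall>x0\<in>psphere p. \<exists>u\<in>psphere p. pnorm p (B u) = 1 \<and> pnorm p (u - x0) < \<epsilon>"
      proof
        fix x0 assume "x0 \<in> psphere p"
        then obtain u where "u \<in> psphere p" "pnorm p (A u) = 1" "pnorm p (u - x0) < \<epsilon>"
          using H' by blast
        then show "\<exists>u\<in>psphere p. pnorm p (B u) = 1 \<and> pnorm p (u - x0) < \<epsilon>"
          using isoG[of "A u"] unfolding B_def by auto
      qed
      have "B x = x" for x
        by (rule core[OF p3 linB ep(1) _ hBI hd]) (use ep(2) e0_def in simp)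
      then have "A x = T x" for x using Tg[of "A x"] unfolding B_def by (metis comp_apply)
      then show "A = T" by auto
    qed
  qed
  ultimately show ?thesis by blast
qed

end
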